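(* For every closed point $v$ of $\mathscr C$, $$\sum_{(e_0,\boldsymbol e,\boldsymbol f)\in\{0,1\}^7}\mu^0_S(e_0,\boldsymbol e,\boldsymbol f)\,\mathrm{fact}_v(e_0,\boldsymbol e,\boldsymbol f)=\sum_{(e_0,\boldsymbol e,\boldsymbol f)\in\{0,1\}^7}\mu^0_S(e_0,\boldsymbol e,\boldsymbol f)\,\mathrm{dens}_{S,v}(e_0,\boldsymbol e,\boldsymbol f).$$
   Context: $k$ is a finite field, $\mathscr C$ a smooth projective geometrically integral curve over $k$; for a closed point $v$, $\kappa_v$ is its residue field and $q_v=\#\kappa_v$. Elements of $\{0,1\}^7$ are written $(e_0,\boldsymbol e,\boldsymbol f)$, $\boldsymbol e=(e_1,e_2,e_3)$, $\boldsymbol f=(f_1,f_2,f_3)$; $i,j\in\{1,2,3\}$. Let $\{0,1\}^7_S$ be the set of $(e_0,\boldsymbol e,\boldsymbol f)$ with $\min\big((\sum_{j\neq i}e_j+\sum_jf_j)_i,(e_0+\sum_{j\neq i}(e_j+f_j))_i,e_0+\sum_ie_i\big)=0$. Let $\operatorname{Div}_{S,\mathrm{prim}}$ be the set of $(\mathcal E_0,\mathcal E_1,\mathcal E_2,\mathcal E_3,\mathcal F_1,\mathcal F_2,\mathcal F_3)\in\operatorname{Div}_{\mathrm{eff}}(\mathscr C)^7$ for which the gcd (minimum of multiplicities at each closed point) of $\sum_{j\neq i}\mathcal E_j+\sum_j\mathcal F_j$ ($i=1,2,3$), $\mathcal E_0+\sum_{j\neq i}(\mathcal E_j+\mathcal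 F_j)$ ($i=1,2,3$) and $\mathcal E_0+\sum_i\mathcal E_i$ is $0$; $\mu_S$ is the unique function on $\operatorname{Div}_{\mathrm{eff}}(\mathscr C)^7$ with $\mathbf 1_{\operatorname{Div}_{S,\mathrm{prim}}}(\boldsymbol{\mathcal D})=\sum_{0\leq\boldsymbol{\mathcal E}\leq\boldsymbol{\mathcal D}}\mu_S(\boldsymbol{\mathcal E})$; and for $\boldsymbol n\in\{0,1\}^7$, $\mu^0_S(\boldsymbol n)=\mu_S((n_\alpha v)_\alpha)$, which is independent of the closed point $v$ (equivalently, $\mu^0_S$ is the unique function on $\{0,1\}^7$ with $\mathbf 1_{\{0,1\}^7_S}(\boldsymbol n)=\sum_{\boldsymbol m\leq\boldsymbol n}\mu^0_S(\boldsymbol m)$). For $\boldsymbol\nu\in\mathbf N^3$, $F_{\boldsymbol\nu}(\rho,\boldsymbol T)=\sum_{\boldsymbol n\in\mathbf N^3}\rho^{\min_i(n_i+\nu_i)}\prod_iT_i^{n_i}$ and $\widetilde F_{\boldsymbol\nu}(\rho,\boldsymbol T)=(1-\rho T_1T_2T_3)\prod_i(1-T_i)F_{\boldsymbol\nu}(\rho,\boldsymbol T)$ (a polynomial in $\boldsymbol T$). Define $$\mathrm{fact}_v(e_0,\boldsymbol e,\boldsymbol f)=\frac{1}{1-q_v^{-2}}\,q_v^{-e_0-\sum_i(e_i+f_i)}\,\widetilde F_{(e_i+f_i)_i}\big(q_v,(q_v^{-1},q_v^{-1},q_v^{-1})\big).$$ For $\boldsymbol n=(e_0,\boldsymbol e,\boldsymbol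 f)\in\{0,1\}^7$ let $\kappa_v^{\boldsymbol n}$ be the set of $(x_0,x_1,x_2,x_3,y_1,y_2,y_3)\in\kappa_v^7$ whose coordinates vanish at the positions where $\boldsymbol n$ has entry $1$, and $$\mathrm{dens}_{S,v}(e_0,\boldsymbol e,\boldsymbol f)=q_v^{-6}\,\#\{(x_0,\boldsymbol x,\boldsymbol y)\in\kappa_v^{(e_0,\boldsymbol e,\boldsymbol f)}:\ x_1y_1+x_2y_2+x_3y_3=0\}.$$ *)

theory Defs
  imports "HOL-Analysis.Analysis"
begin

text \<open>Index 0 is e_0, indices 1,2,3 are e_1,e_2,e_3,
  indices 4,5,6 are f_1,f_2,f_3 (so f_i is at index i+3).\<close>

definition B7 :: "(nat \<Rightarrow> nat) set" where
  "B7 = {n. (\<forall>i<7. n i \<in> {0,1}) \<and> (\<forall>i\<ge>7. n i = 0)}"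

definition formA :: "(nat \<Rightarrow> nat) \<Rightarrow> nat \<Rightarrow> nat" where
  "formA n i = (\<Sum>j\<in>{1,2,3} - {i}. n j) + (\<Sum>j\<in>{1,2,3}. n (j+3))"

definition formB :: "(nat \<Rightarrow> nat) \<Rightarrow> nat \<Rightarrow> nat" where
  "formB n i = n 0 + (\<Sum>j\<in>{1,2,3} - {i}. n j + n (j+3))"

definition formC :: "(nat \<Rightarrow> nat) \<Rightarrow> nat" where
  "formC n = n 0 + (\<Sum>j\<in>{1,2,3}. n j)"

definition B7S :: "(nat \<Rightarrow> nat) set" where
  "B7S = {n\<in>B7. min (Min ((\<lambda>i. formA n i) ` {1,2,3}))
                    (min (Min ((\<lambda>i. formB n i) ` {1,2,3})) (formC n)) = 0}"

definition mu0S :: "(nat \<Rightarrow> nat) \<Rightarrow> int" where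
  "mu0S = (THE \<mu>. (\<forall>n. n \<notin> B7 \<longrightarrow> \<mu> n = 0) \<and>
              (\<forall>n\<in>B7. (if n \<in> B7S then 1 else 0) = (\<Sum>m\<in>{m\<in>B7. \<forall>i. m i \<le> n i}. \<mu> m)))"

text \<open>F_nu(rho, T) = sum over n in N^3 of rho^(min_i (n_i+nu_i)) * prod_i T_i^(n_i), as a real series
  (used only at points where it converges absolutely).\<close>
definition Fser :: "nat \<times> nat \<times> nat \<Rightarrow> real \<Rightarrow> real \<times> real \<times> real \<Rightarrow> real" where
  "Fser \<nu> \<rho> T = (case \<nu> of (\<nu>1, \<nu>2, \<nu>3) \<Rightarrow> case T of (T1, T2, T3) \<Rightarrow>
     infsum (\<lambda>(n1::nat, n2::nat, n3::nat).
        \<rho> ^ (min (n1 + \<nu>1) (min (n2 + \<nu>2) (n3 + \<nu>3))) * T1 ^ n1 * T2 ^ n2 * T3 ^ n3) UNIV)"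

definition Ftilde :: "nat \<times> nat \<times> nat \<Rightarrow> real \<Rightarrow> real \<times> real \<times> real \<Rightarrow> real" where
  "Ftilde \<nu> \<rho> T = (case T of (T1, T2, T3) \<Rightarrow>
     (1 - \<rho> * T1 * T2 * T3) * (1 - T1) * (1 - T2) * (1 - T3) * Fser \<nu> \<rho> T)"

text \<open>fact_v, with q = q_v = #kappa_v.\<close>
definition factv :: "nat \<Rightarrow> (nat \<Rightarrow> nat) \<Rightarrow> real" where
  "factv q n = (1 / (1 - real q powi (-2))) *
      real q powi (- int (n 0 + (\<Sum>i\<in>{1,2,3}. n i + n (i+3)))) *
      Ftilde (n 1 + n 4, n 2 + n 5, n 3 + n 6) (real q) (1 / real q, 1 / real q, 1 / real q)"

text \<open>dens_{S,v}, with kappa_v the finite field 'a; points of kappa_v^7 are functions on {0..<7}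
  (index layout as above: x_0, x_1,x_2,x_3, y_1,y_2,y_3).\<close>
definition densS :: "'a::{finite,field} itself \<Rightarrow> (nat \<Rightarrow> nat) \<Rightarrow> real" where
  "densS _ n = real CARD('a) powi (-6) *
     real (card {x \<in> {0..<7} \<rightarrow>\<^sub>E (UNIV :: 'a set).
                   (\<forall>i<7. n i = 1 \<longrightarrow> x i = 0) \<and>
                   x 1 * x 4 + x 2 * x 5 + x 3 * x 6 = 0})"

end

theory Submission
  imports Defs
begin


lemma has_sum_Sigma_nonneg:
  fixes g :: "'a \<times> 'b \<Rightarrow> real"
  assumes nn: "\<And>p. g p \<ge> 0"
    and inner: "\<And>s. ((\<lambda>n. g (s,n)) has_sum b s) UNIV"
    and outer: "(b has_sum S) UNIV"
  shows "(g has_sum S) UNIV"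
proof -
  have bnn: "b s \<ge> 0" for s
    using has_sum_nonneg[OF inner[of s]] nn by auto
  have le: "sum g F \<le> S" if "finite F" for F
  proof -
    let ?A = "fst ` F" and ?B = "snd ` F"
    have "F \<subseteq> ?A \<times> ?B" by force
    hence "sum g F \<le> sum g (?A \<times> ?B)"
      by (intro sum_mono2) (use that nn in auto)
    also have "\<dots> = (\<Sum>s\<in>?A. \<Sum>n\<in>?B. g (s,n))"
      by (simp add: sum.cartesian_product)
    also have "\<dots> \<le> (\<Sum>s\<in>?A. b s)"
      by (intro sum_mono finite_sum_le_has_sum[OF inner]) (use that nn in auto)
    also have "\<dots> \<le> S"
      by (intro finite_sum_le_has_sum[OF outer]) (use that bnn in auto)
    finally show ?thesis .
  qed
  have "g summable_on UNIV"
    by (rule nonneg_bdd_above_summable_on) (use nn le in \<open>auto intro!: bdd_aboveI2\<close>)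
  hence hs: "(g has_sum infsum g UNIV) (Sigma UNIV (\<lambda>_. UNIV))"
    by (simp add: summable_iff_has_sum_infsum)
  have "(b has_sum infsum g UNIV) UNIV"
    by (rule has_sum_Sigma[OF isUCont_plus hs]) (use inner in auto)
  hence "S = infsum g UNIV" using outer has_sum_unique by blast
  with hs show ?thesis by simp
qed

lemma has_sum_prod_nonneg:
  fixes f :: "'a \<Rightarrow> real" and h :: "'b \<Rightarrow> real"
  assumes "\<And>a. f a \<ge> 0" "\<And>b. h b \<ge> 0"
    and "(f has_sum F) UNIV" "(h has_sum H) UNIV"
  shows "((\<lambda>(a,b). f a * h b) has_sum (F * H)) UNIV"
  by (rule has_sum_Sigma_nonneg[where b="\<lambda>a. f a * H"])
     (use assms in \<open>auto intro: mult_nonneg_nonneg has_sum_cmult_right has_sum_cmult_left\<close>)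

lemma geom_tail_has_sum:
  fixes x :: real
  assumes "0 \<le> x" "x < 1"
  shows "((\<lambda>n. if k \<le> n then x ^ n else 0) has_sum (x ^ k / (1 - x))) UNIV"
proof -
  have "(\<lambda>n. x ^ k * x ^ n) sums (x ^ k * (1 / (1 - x)))"
    by (intro sums_mult geometric_sums) (use assms in auto)
  hence "(\<lambda>n. (\<lambda>n. if k \<le> n then x ^ n else 0) (n + k)) sums (x ^ k / (1 - x))"
    by (simp add: power_add mult.commute)
  hence "(\<lambda>n. (if k \<le> n then x ^ n else 0)) sums (x ^ k / (1 - x) + (\<Sum>i<k. if k \<le> i then x ^ i else 0))"
    by (subst (asm) sums_iff_shift)
  hence "(\<lambda>n. (if k \<le> n then x ^ n else 0)) sums (x ^ k / (1 - x))" by simp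
  thus ?thesis
    by (rule sums_nonneg_imp_has_sum) (use assms in auto)
qed

fun cc :: "real \<Rightarrow> nat \<Rightarrow> real" where
  "cc q 0 = 1" | "cc q (Suc s) = q ^ Suc s - q ^ s"

lemma sum_cc: "(\<Sum>s\<le>m. cc q s) = q ^ m"
  by (induction m) auto

lemma cc_nonneg: "q \<ge> 1 \<Longrightarrow> cc q s \<ge> 0"
  by (cases s) (auto intro: power_increasing)

lemma tail_alg0:
  fixes Q X y A B C :: real
  assumes "Q * X = 1" "y \<noteq> 0"
  shows "Q * y * (X * A / y * (X * B / y * (X * C / y))) = A * B * C / y^2 * (X * X)"
proof -
  have "Q * y * (X * A / y * (X * B / y * (X * C / y))) = (Q * X) * (A * B * C / y^2 * (X * X))"
    using assms(2) by (simp add: field_simps power2_eq_square)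
  thus ?thesis using assms(1) by simp
qed

lemma tail_alg:
  fixes Q X x A B C :: real
  assumes "Q * X = 1" "x < 1"
  shows "Q * (1 - x) * (X * A / (1-x) * (X * B / (1-x) * (X * C / (1-x)))) = A * B * C / (1-x)^2 * (X * X)"
  by (rule tail_alg0) (use assms in auto)

lemma Fser_closed:
  fixes q :: real and a b c :: nat
  assumes q: "q > 1" and nu: "a \<le> 2" "b \<le> 2" "c \<le> 2"
  defines "x \<equiv> 1 / q"
  shows "Fser (a,b,c) q (x,x,x) =
     1 / (1-x)^3 + (q - 1) * x^(1-a) * x^(1-b) * x^(1-c) / (1-x)^3
     + q^(a+b+c) * x^4 / ((1-x)^2 * (1 - x^2))"
     (is "_ = ?S")
proof -
  have x0: "0 \<le> x" and x1: "x < 1" using q by (auto simp: x_def)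
  have xq: "x * q = 1" using q by (simp add: x_def)
  define g :: "nat \<times> nat \<times> nat \<times> nat \<Rightarrow> real" where
    "g = (\<lambda>(s,n1,n2,n3). if s \<le> min (n1+a) (min (n2+b) (n3+c))
           then cc q s * (x^n1 * (x^n2 * x^n3)) else 0)"
  define P where "P s = x^(s-a)/(1-x) * (x^(s-b)/(1-x) * (x^(s-c)/(1-x)))" for s
  have gnn: "g p \<ge> 0" for p
    using cc_nonneg[of q] q x0 by (auto simp: g_def split: prod.splits)
  have inner: "((\<lambda>n. g (s,n)) has_sum (cc q s * P s)) UNIV" for s
  proof -
    let ?f = "\<lambda>k n. if k \<le> n then x ^ n else 0"
    have h23: "((\<lambda>(n2,n3). ?f (s-b) n2 * ?f (s-c) n3) has_sum
                (x^(s-b)/(1-x) * (x^(s-c)/(1-x)))) UNIV"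
      by (rule has_sum_prod_nonneg) (use x0 x1 in \<open>auto intro!: geom_tail_has_sum\<close>)
    have h123: "((\<lambda>(n1,n23). ?f (s-a) n1 * (\<lambda>(n2,n3). ?f (s-b) n2 * ?f (s-c) n3) n23) has_sum
                P s) UNIV"
      unfolding P_def
      by (rule has_sum_prod_nonneg[OF _ _ _ h23]) (use x0 x1 in \<open>auto intro!: geom_tail_has_sum\<close>)
    have "((\<lambda>n. cc q s * (\<lambda>(n1,n23). ?f (s-a) n1 * (\<lambda>(n2,n3). ?f (s-b) n2 * ?f (s-c) n3) n23) n)
            has_sum (cc q s * P s)) UNIV"
      by (rule has_sum_cmult_right[OF h123])
    thus ?thesis
      by (rule has_sum_cong[THEN iffD1, rotated]) (auto simp: g_def)
  qed
  have outer: "((\<lambda>s. cc q s * P s) has_sum ?S) UNIV"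
  proof -
    have tail: "cc q (t+2) * P (t+2) = q^(a+b+c) / (1-x)^2 * (x^2)^(t+2)" for t
    proof -
      have pw: "x^(t+2-d) = x^(t+2) * q^d" if "d \<le> 2" for d
      proof -
        have e: "x^(t+2) = x^(t+2-d) * x^d" using that by (simp flip: power_add)
        have "x^d * q^d = 1" by (metis power_mult_distrib xq power_one)
        hence "x^(t+2) * q^d = x^(t+2-d) * (x^d * q^d)" unfolding e by (simp only: mult.assoc)
        thus ?thesis using \<open>x^d * q^d = 1\<close> by simp
      qed
      have cc2: "cc q (t+2) = q^(t+2) * (1 - x)"
        using q by (simp add: x_def field_simps)
      have qx: "q^(t+2) * x^(t+2) = 1" by (metis power_mult_distrib mult.commute xq power_one)
      have sq: "(x^2)^(t+2) = x^(t+2) * x^(t+2)" by (simp add: power2_eq_square power_mult_distrib)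
      show ?thesis
        unfolding P_def pw[OF nu(1)] pw[OF nu(2)] pw[OF nu(3)] cc2 sq power_add[of q a] power_add[of q "a+b"]
        by (rule tail_alg[OF qx x1])
    qed
    have x2: "x^2 < 1" using x0 x1 by (simp add: power_less_one_iff)
    have gx: "(\<lambda>t. (x^2)^t) sums (1 / (1 - x^2))"
      by (rule geometric_sums) (use x0 x2 in auto)
    have "(\<lambda>t. q^(a+b+c) / (1-x)^2 * ((x^2)^2 * (x^2)^t)) sums (q^(a+b+c) / (1-x)^2 * ((x^2)^2 * (1 / (1 - x^2))))"
      by (intro sums_mult gx)
    moreover have "(\<lambda>t. q^(a+b+c) / (1-x)^2 * ((x^2)^2 * (x^2)^t)) = (\<lambda>t. q^(a+b+c) / (1-x)^2 * (x^2)^(t+2))"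
      by (rule ext) (simp add: power_add algebra_simps)
    ultimately have "(\<lambda>t. q^(a+b+c) / (1-x)^2 * (x^2)^(t+2)) sums (q^(a+b+c) / (1-x)^2 * ((x^2)^2 * (1 / (1 - x^2))))"
      by simp
    hence "(\<lambda>t. cc q (t+2) * P (t+2)) sums (q^(a+b+c) * x^4 / ((1-x)^2 * (1 - x^2)))"
      unfolding tail by (simp add: power_mult[symmetric] field_simps)
    hence "(\<lambda>s. cc q s * P s) sums (q^(a+b+c) * x^4 / ((1-x)^2 * (1 - x^2)) + (\<Sum>i<2. cc q i * P i))"
      by (subst sums_iff_shift[symmetric])
    moreover have "(\<Sum>i<2. cc q i * P i) = 1 / (1-x)^3 + (q - 1) * x^(1-a) * x^(1-b) * x^(1-c) / (1-x)^3"
      using x1 by (simp add: P_def numeral_2_eq_2 power3_eq_cube field_simps)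
    ultimately have "(\<lambda>s. cc q s * P s) sums ?S" by (simp add: algebra_simps)
    thus ?thesis
      by (rule sums_nonneg_imp_has_sum)
         (use cc_nonneg[of q] q x0 x1 in \<open>auto simp: P_def intro!: mult_nonneg_nonneg divide_nonneg_pos\<close>)
  qed
  have gS: "(g has_sum ?S) UNIV"
    by (rule has_sum_Sigma_nonneg[OF gnn inner outer])
  have gS': "((g \<circ> prod.swap) has_sum ?S) UNIV"
    using has_sum_reindex[of prod.swap UNIV g ?S] gS by simp
  have inner2: "((\<lambda>s. (g \<circ> prod.swap) (n,s)) has_sum
      (case n of (n1,n2,n3) \<Rightarrow> q ^ min (n1+a) (min (n2+b) (n3+c)) * x^n1 * x^n2 * x^n3)) UNIV" for n
  proof -
    obtain n1 n2 n3 where n: "n = (n1,n2,n3)" by (cases n) auto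
    let ?m = "min (n1+a) (min (n2+b) (n3+c))"
    have "((\<lambda>s. cc q s * (x^n1 * (x^n2 * x^n3))) has_sum (\<Sum>s\<le>?m. cc q s * (x^n1 * (x^n2 * x^n3)))) {..?m}"
      by (rule has_sum_finite) simp
    also have "(\<Sum>s\<le>?m. cc q s * (x^n1 * (x^n2 * x^n3))) = q ^ ?m * x^n1 * x^n2 * x^n3"
      by (simp add: sum_distrib_right[symmetric] sum_cc)
    finally have h: "((\<lambda>s. cc q s * (x^n1 * (x^n2 * x^n3))) has_sum (q ^ ?m * x^n1 * x^n2 * x^n3)) {..?m}" .
    have "((\<lambda>s. (g \<circ> prod.swap) ((n1,n2,n3), s)) has_sum (q ^ ?m * x^n1 * x^n2 * x^n3)) UNIV
          \<longleftrightarrow> ((\<lambda>s. cc q s * (x^n1 * (x^n2 * x^n3))) has_sum (q ^ ?m * x^n1 * x^n2 * x^n3)) {..?m}"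
      by (rule has_sum_cong_neutral) (auto simp: g_def)
    with h show ?thesis unfolding n by simp
  qed
  have "((\<lambda>n. case n of (n1,n2,n3) \<Rightarrow> q ^ min (n1+a) (min (n2+b) (n3+c)) * x^n1 * x^n2 * x^n3)
         has_sum ?S) UNIV"
    by (rule has_sum_Sigma[OF isUCont_plus, where B="\<lambda>_. UNIV"]) (use gS' inner2 in auto)
  thus ?thesis
    unfolding Fser_def by (simp add: infsumI)
qed



section \<open>Polynomials as coefficient lists\<close>

fun ev :: "int list \<Rightarrow> real \<Rightarrow> real" where
  "ev [] q = 0" | "ev (c # cs) q = of_int c + q * ev cs q"

fun padd :: "int list \<Rightarrow> int list \<Rightarrow> int list" where
  "padd [] ys = ys" | "padd xs [] = xs" | "padd (x # xs) (y # ys) = (x + y) # padd xs ys"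

definition psc :: "int \<Rightarrow> int list \<Rightarrow> int list" where
  "psc c xs = map (\<lambda>x. c * x) xs"

fun pmul :: "int list \<Rightarrow> int list \<Rightarrow> int list" where
  "pmul [] ys = []" | "pmul (x # xs) ys = padd (psc x ys) (0 # pmul xs ys)"

definition monoP :: "int \<Rightarrow> nat \<Rightarrow> int list" where
  "monoP c k = replicate k 0 @ [c]"

lemma ev_padd[simp]: "ev (padd xs ys) q = ev xs q + ev ys q"
  by (induction xs ys rule: padd.induct) (auto simp: algebra_simps)

lemma ev_psc[simp]: "ev (psc c xs) q = of_int c * ev xs q"
  by (induction xs) (auto simp: psc_def algebra_simps)

lemma ev_pmul[simp]: "ev (pmul xs ys) q = ev xs q * ev ys q"
  by (induction xs) (auto simp: algebra_simps)

lemma ev_mono[simp]: "ev (monoP c k) q = of_int c * q ^ k"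
  by (induction k) (auto simp: monoP_def)

lemma ev_sum_list: "ev (foldr padd xs []) q = (\<Sum>p\<leftarrow>xs. ev p q)"
  by (induction xs) auto

section \<open>The factor fact_v\<close>

definition Wn :: "(nat \<Rightarrow> nat) \<Rightarrow> nat" where
  "Wn n = n 0 + (n 1 + n 4) + (n 2 + n 5) + (n 3 + n 6)"
definition Vn :: "(nat \<Rightarrow> nat) \<Rightarrow> nat" where
  "Vn n = (n 1 + n 4) + (n 2 + n 5) + (n 3 + n 6)"
definition Zn :: "(nat \<Rightarrow> nat) \<Rightarrow> nat" where
  "Zn n = (1 - (n 1 + n 4)) + (1 - (n 2 + n 5)) + (1 - (n 3 + n 6))"

definition PF :: "(nat \<Rightarrow> nat) \<Rightarrow> int list" where
  "PF n = (let W = Wn n; V = Vn n; z = Zn n in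
     padd (monoP 1 (12 - W)) (padd (monoP (-1) (12 - (W+2))) (padd (monoP 1 (13 - (W+z))) (padd (monoP (-1) (12 - (W+z)))
      (padd (monoP (-1) (13 - (W+z+2))) (padd (monoP 1 (12 - (W+z+2))) (padd (monoP 1 (12+V - (W+4))) (monoP (-1) (12+V-(W+5))))))))))"

lemma pw2: "(Q::real) \<noteq> 0 \<Longrightarrow> k \<le> j \<Longrightarrow> Q ^ (j - k) = Q ^ j * (1/Q) ^ k"
  by (simp add: power_diff power_one_over)

lemma Ftilde_alg0:
  fixes w y D X C :: real
  assumes "y \<noteq> 0" "w \<noteq> 0"
  shows "w * y * y * y * (1 / y^3 + D * X / y^3 + C / (y^2 * w)) = w * (1 + D * X) + y * C"
  using assms by (simp add: field_simps power2_eq_square power3_eq_cube)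

lemma Ftilde_alg:
  fixes Q x X C :: real
  assumes "x < 1" "0 \<le> x" "Q * x = 1"
  shows "(1 - Q * x * x * x) * (1 - x) * (1 - x) * (1 - x) *
     (1 / (1-x)^3 + (Q - 1) * X / (1-x)^3 + C * x^4 / ((1-x)^2 * (1 - x^2)))
   = (1 - x^2) * (1 + (Q - 1) * X) + (1 - x) * C * x^4"
proof -
  have a: "1 - x \<noteq> 0" using assms by auto
  have "x^2 < 1" using assms by (simp add: power_less_one_iff)
  hence b: "1 - x^2 \<noteq> 0" by linarith
  have c: "Q * x * x * x = x * x" using assms(3) by (simp add: mult.commute mult.left_commute)
  have d: "1 - x * x = 1 - x^2" by (simp add: power2_eq_square)
  show ?thesis unfolding c d
    using Ftilde_alg0[OF a b, of "Q - 1" X "C * x^4"] by (simp add: mult.assoc)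
qed

lemma alg8:
  fixes T A B C Q x P R S :: real
  assumes "S = R * x"
  shows "T * A - T * (A * P) + T * Q * (A * B) - T * (A * B) - T * Q * (A * B * P) + T * (A * B * P)
         + T * C * (A * R) - T * C * (A * S) = T * A * ((1 - P) * (1 + (Q - 1) * B) + (1 - x) * C * R)"
  by (simp add: assms algebra_simps)

lemma factv_poly:
  fixes q :: nat and n :: "nat \<Rightarrow> nat"
  assumes q: "q \<ge> 2" and n: "\<And>i. i < 7 \<Longrightarrow> n i \<le> 1"
  shows "(1 - real q powi (-2)) * real q ^ 12 * factv q n = ev (PF n) (real q)"
proof -
  define Q where "Q = real q"
  define x where "x = 1 / Q"
  have Q1: "Q > 1" using q by (simp add: Q_def)
  have x0: "0 \<le> x" "x < 1" using Q1 by (auto simp: x_def)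
  have Qx: "Q * x = 1" using Q1 by (simp add: x_def)
  have nu: "n 1 + n 4 \<le> 2" "n 2 + n 5 \<le> 2" "n 3 + n 6 \<le> 2" using n[of 1] n[of 4] n[of 2] n[of 5] n[of 3] n[of 6] by auto
  have Xz: "x^(1-(n 1 + n 4)) * x^(1-(n 2 + n 5)) * x^(1-(n 3 + n 6)) = x ^ Zn n"
    by (simp add: Zn_def power_add)
  have F: "Fser (n 1 + n 4, n 2 + n 5, n 3 + n 6) Q (x,x,x) =
     1 / (1-x)^3 + (Q - 1) * x ^ Zn n / (1-x)^3 + Q ^ Vn n * x^4 / ((1-x)^2 * (1 - x^2))"
    using Fser_closed[OF Q1 nu] unfolding x_def[symmetric] Xz[symmetric]
    by (simp add: Vn_def mult.assoc)
  have Ft: "Ftilde (n 1 + n 4, n 2 + n 5, n 3 + n 6) Q (x,x,x) =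
     (1 - x^2) * (1 + (Q - 1) * x ^ Zn n) + (1 - x) * Q ^ Vn n * x^4"
    unfolding Ftilde_def F using Ftilde_alg[OF x0(2) x0(1) Qx] by simp
  have pi: "Q powi (-2) = x^2" "Q powi (- int (Wn n)) = x ^ Wn n"
    by (simp_all add: x_def power_int_minus power_one_over inverse_eq_divide)
  have sumeq: "n 0 + (\<Sum>i\<in>{1,2,3}. n i + n (i+3)) = Wn n" by (simp add: Wn_def)
  have "x^2 < 1" using x0 by (simp add: power_less_one_iff)
  hence b: "1 - x^2 \<noteq> 0" by linarith
  have fv: "factv q n = 1 / (1 - Q powi (-2)) * Q powi (- int (Wn n)) * Ftilde (n 1 + n 4, n 2 + n 5, n 3 + n 6) Q (x,x,x)"
    unfolding factv_def sumeq Q_def x_def by (rule refl)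
  have lhs: "(1 - real q powi (-2)) * real q ^ 12 * factv q n = Q^12 * x ^ Wn n * ((1 - x^2) * (1 + (Q - 1) * x ^ Zn n) + (1 - x) * Q ^ Vn n * x^4)"
    unfolding fv Ft pi Q_def[symmetric] using b by simp
  have W7: "Wn n \<le> 7" and Z3: "Zn n \<le> 3" using n[of 0] nu by (auto simp: Wn_def Zn_def)
  have Q0: "Q \<noteq> 0" using Q1 by auto
  have pw: "Q ^ (j - k) = Q ^ j * x ^ k" if "k \<le> j" for j k
    using pw2[OF Q0 that] by (simp add: x_def)
  have q13: "Q^13 = Q^12 * Q"
  proof -
    have "Q^13 = Q^(12+1)" by simp
    thus ?thesis by (simp only: power_add power_one_right)
  qed
  let ?W = "Wn n" and ?Z = "Zn n" and ?V = "Vn n"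
  have e1: "Q ^ (12 - ?W) = Q^12 * x^?W" using W7 by (intro pw) simp
  have e2: "Q ^ (12 - (?W+2)) = Q^12 * x^(?W+2)" using W7 by (intro pw) simp
  have e3: "Q ^ (13 - (?W+?Z)) = Q^12 * Q * x^(?W+?Z)" using W7 Z3 pw[of "?W+?Z" 13] q13 by simp
  have e4: "Q ^ (12 - (?W+?Z)) = Q^12 * x^(?W+?Z)" using W7 Z3 by (intro pw) simp
  have e5: "Q ^ (13 - (?W+?Z+2)) = Q^12 * Q * x^(?W+?Z+2)" using W7 Z3 pw[of "?W+?Z+2" 13] q13 by simp
  have e6: "Q ^ (12 - (?W+?Z+2)) = Q^12 * x^(?W+?Z+2)" using W7 Z3 by (intro pw) simp
  have e7: "Q ^ (12 + ?V - (?W+4)) = Q^12 * Q^?V * x^(?W+4)" using W7 pw[of "?W+4" "12 + ?V"] by (simp add: power_add)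
  have e8: "Q ^ (12 + ?V - (?W+5)) = Q^12 * Q^?V * x^(?W+5)" using W7 pw[of "?W+5" "12 + ?V"] by (simp add: power_add)
  have "ev (PF n) Q = Q^12 * x^?W - Q^12 * x^(?W+2) + Q^12 * Q * x^(?W+?Z) - Q^12 * x^(?W+?Z)
        - Q^12 * Q * x^(?W+?Z+2) + Q^12 * x^(?W+?Z+2) + Q^12 * Q^?V * x^(?W+4) - Q^12 * Q^?V * x^(?W+5)"
    unfolding PF_def Let_def ev_padd ev_mono e1 e2 e3 e4 e5 e6 e7 e8 by simp
  also have "\<dots> = Q^12 * x ^ Wn n * ((1 - x^2) * (1 + (Q - 1) * x ^ Zn n) + (1 - x) * Q ^ Vn n * x^4)"
    unfolding power_add by (rule alg8) (simp add: eval_nat_numeral)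
  finally show ?thesis using lhs by (simp add: Q_def)
qed



section \<open>Counting points\<close>

definition Zs :: "nat \<Rightarrow> 'a::zero set" where
  "Zs b = (if b = 1 then {0} else UNIV)"

definition Dc :: "'a::{finite,field} set \<Rightarrow> 'a set \<Rightarrow> 'a \<Rightarrow> real" where
  "Dc Z Z' c = (\<Sum>u\<in>Z. \<Sum>v\<in>Z'. if u * v = c then 1 else 0)"

lemma sum_indicator_card: "finite A \<Longrightarrow> (\<Sum>v\<in>A. if P v then 1 else 0 :: real) = real (card {v\<in>A. P v})"
  by (simp add: sum.If_cases Int_def)

lemma Dc_UNIV_UNIV:
  "Dc (UNIV :: 'a::{finite,field} set) UNIV c = (real CARD('a) - 1) + real CARD('a) * (if c = 0 then 1 else 0)"
proof -
  have inner: "(\<Sum>v\<in>UNIV. if u * v = c then 1 else 0 :: real) = (if u = 0 then (if c = 0 then real CARD('a) else 0) else 1)" for u :: 'a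
  proof (cases "u = 0")
    case True thus ?thesis by auto
  next
    case False
    hence "{v\<in>UNIV. u * v = c} = {c / u}" by (auto simp: field_simps)
    thus ?thesis using False by (simp add: sum_indicator_card)
  qed
  have "Dc (UNIV :: 'a set) UNIV c = (\<Sum>u::'a\<in>UNIV. (if u = 0 then (if c = 0 then real CARD('a) else 0) else 1))"
    unfolding Dc_def by (rule sum.cong[OF refl], rule inner)
  also have "\<dots> = (if c = 0 then real CARD('a) else 0) + (\<Sum>u\<in>UNIV - {0::'a}. 1)"
    by (subst sum.remove[of _ 0]) auto
  also have "\<dots> = (real CARD('a) - 1) + real CARD('a) * (if c = 0 then 1 else 0)"
    by (simp add: card_Diff_singleton)
  finally show ?thesis .
qed

definition alph :: "nat \<Rightarrow> nat \<Rightarrow> real \<Rightarrow> real" where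
  "alph b b' q = (if b = 1 \<or> b' = 1 then 0 else q - 1)"
definition bet :: "nat \<Rightarrow> nat \<Rightarrow> real \<Rightarrow> real" where
  "bet b b' q = (if b = 1 \<and> b' = 1 then 1 else q)"

lemma Dc_eval:
  "Dc (Zs b :: 'a::{finite,field} set) (Zs b') c
     = alph b b' (real CARD('a)) + bet b b' (real CARD('a)) * (if c = 0 then 1 else 0)"
proof (cases "b = 1"; cases "b' = 1")
  assume "b \<noteq> 1" "b' \<noteq> 1"
  thus ?thesis using Dc_UNIV_UNIV[of c] by (simp add: Zs_def alph_def bet_def)
qed (auto simp: Zs_def alph_def bet_def Dc_def eq_commute[of 0 c])


definition tup7 :: "(nat \<Rightarrow> 'a) \<Rightarrow> 'a \<times> 'a \<times> 'a \<times> 'a \<times> 'a \<times> 'a \<times> 'a" where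
  "tup7 x = (x 0, x 1, x 4, x 2, x 5, x 3, x 6)"

lemma lt7: "i < (7::nat) \<longleftrightarrow> i = 0 \<or> i = 1 \<or> i = 2 \<or> i = 3 \<or> i = 4 \<or> i = 5 \<or> i = 6"
  by auto

lemma inj_tup7: "inj_on tup7 ({0..<7} \<rightarrow>\<^sub>E UNIV)"
proof (rule inj_onI)
  fix x y assume x: "x \<in> {0..<7} \<rightarrow>\<^sub>E UNIV" and y: "y \<in> {0..<7} \<rightarrow>\<^sub>E UNIV" and e: "tup7 x = tup7 y"
  show "x = y"
  proof
    fix i show "x i = y i"
    proof (cases "i < 7")
      case True thus ?thesis using e unfolding lt7 by (auto simp: tup7_def)
    next
      case False
      hence i: "i \<notin> {0..<7}" by simp
      show ?thesis using PiE_arb[OF x i] PiE_arb[OF y i] by simp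
    qed
  qed
qed

lemma sum_cart: "finite A \<Longrightarrow> finite B \<Longrightarrow> sum f (A \<times> B) = (\<Sum>a\<in>A. \<Sum>b\<in>B. f (a,b))"
  by (simp add: sum.cartesian_product)

lemma mem_Zs: "x \<in> Zs b \<longleftrightarrow> (b = 1 \<longrightarrow> x = 0)"
  by (auto simp: Zs_def)

lemma count_nested:
  fixes n :: "nat \<Rightarrow> nat"
  shows "real (card {x \<in> {0..<7} \<rightarrow>\<^sub>E (UNIV::'a::{finite,field} set).
                   (\<forall>i<7. n i = 1 \<longrightarrow> x i = 0) \<and> x 1 * x 4 + x 2 * x 5 + x 3 * x 6 = 0})
   = (\<Sum>x0::'a\<in>Zs (n 0). \<Sum>x1\<in>Zs (n 1). \<Sum>x4\<in>Zs (n 4). \<Sum>x2\<in>Zs (n 2). \<Sum>x5\<in>Zs (n 5).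
       \<Sum>x3\<in>Zs (n 3). \<Sum>x6\<in>Zs (n 6). if x1 * x4 + x2 * x5 + x3 * x6 = (0::'a) then 1 else 0)"
proof -
  let ?S = "{x \<in> {0..<7} \<rightarrow>\<^sub>E (UNIV::'a set).
                   (\<forall>i<7. n i = 1 \<longrightarrow> x i = 0) \<and> x 1 * x 4 + x 2 * x 5 + x 3 * x 6 = 0}"
  let ?P = "Zs (n 0) \<times> Zs (n 1) \<times> Zs (n 4) \<times> Zs (n 2) \<times> Zs (n 5) \<times> Zs (n 3) \<times> (Zs (n 6) :: 'a set)"
  let ?Q = "\<lambda>(x0::'a,x1,x4,x2,x5,x3,x6). x1 * x4 + x2 * x5 + x3 * x6 = 0"
  have img: "tup7 ` ?S = {t \<in> ?P. ?Q t}"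
  proof
    show "tup7 ` ?S \<subseteq> {t \<in> ?P. ?Q t}"
    proof
      fix t assume "t \<in> tup7 ` ?S"
      then obtain x where x: "x \<in> ?S" and t: "t = tup7 x" by blast
      have h: "x i = 0" if "i < 7" "n i = 1" for i using x that by blast
      have q: "x 1 * x 4 + x 2 * x 5 + x 3 * x 6 = 0" using x by blast
      have "x 0 \<in> Zs (n 0)" "x 1 \<in> Zs (n 1)" "x 2 \<in> Zs (n 2)" "x 3 \<in> Zs (n 3)"
           "x 4 \<in> Zs (n 4)" "x 5 \<in> Zs (n 5)" "x 6 \<in> Zs (n 6)"
        unfolding mem_Zs using h by simp_all
      thus "t \<in> {t \<in> ?P. ?Q t}" using q unfolding t tup7_def by simp
    qed
  next
    show "{t \<in> ?P. ?Q t} \<subseteq> tup7 ` ?S"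
    proof
      fix t assume tP: "t \<in> {t \<in> ?P. ?Q t}"
      obtain a0 a1 a4 a2 a5 a3 a6 where teq: "t = (a0, a1, a4, a2, a5, a3, a6)" by (cases t) auto
      have m: "a0 \<in> Zs (n 0)" "a1 \<in> Zs (n 1)" "a2 \<in> Zs (n 2)" "a3 \<in> Zs (n 3)"
           "a4 \<in> Zs (n 4)" "a5 \<in> Zs (n 5)" "a6 \<in> Zs (n 6)" and qq: "a1 * a4 + a2 * a5 + a3 * a6 = 0"
        using tP unfolding teq by simp_all
      define x :: "nat \<Rightarrow> 'a" where "x = (\<lambda>i. if i = 0 then a0 else if i = 1 then a1 else if i = 2 then a2 else
        if i = 3 then a3 else if i = 4 then a4 else if i = 5 then a5 else if i = 6 then a6 else undefined)"
      have ext: "x \<in> {0..<7} \<rightarrow>\<^sub>E UNIV"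
        by (simp add: PiE_iff extensional_def x_def)
      have c: "x i = 0" if "i < 7" "n i = 1" for i
      proof -
        have "i = 0 \<or> i = 1 \<or> i = 2 \<or> i = 3 \<or> i = 4 \<or> i = 5 \<or> i = 6" using that(1) lt7 by blast
        thus ?thesis using m that(2) unfolding mem_Zs x_def by (elim disjE) simp_all
      qed
      have xS: "x \<in> ?S" using ext c qq by (simp add: x_def)
      have "tup7 x = t" by (simp add: x_def tup7_def teq)
      thus "t \<in> tup7 ` ?S" using xS by (rule image_eqI[OF sym])
    qed
  qed
  have "card ?S = card (tup7 ` ?S)"
    by (rule card_image[symmetric]) (rule inj_on_subset[OF inj_tup7], blast)
  also have "\<dots> = card {t \<in> ?P. ?Q t}" by (simp only: img)
  finally have "real (card ?S) = (\<Sum>t\<in>?P. if ?Q t then 1 else 0)"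
    by (simp only: sum_indicator_card[OF finite])
  also have "\<dots> = (\<Sum>x0::'a\<in>Zs (n 0). \<Sum>x1\<in>Zs (n 1). \<Sum>x4\<in>Zs (n 4). \<Sum>x2\<in>Zs (n 2). \<Sum>x5\<in>Zs (n 5).
       \<Sum>x3\<in>Zs (n 3). \<Sum>x6\<in>Zs (n 6). if x1 * x4 + x2 * x5 + x3 * x6 = (0::'a) then 1 else 0)"
    by (simp only: sum_cart[OF finite finite] prod.case)
  finally show ?thesis .
qed

lemma sum_pair_affine:
  fixes Z Z' :: "'a::{finite,field} set"
  shows "(\<Sum>u\<in>Z. \<Sum>v\<in>Z'. A + B * (if u * v = c then 1 else 0)) = real (card Z) * real (card Z') * A + B * Dc Z Z' c"
  by (simp add: Dc_def sum.distrib sum_distrib_left)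

lemma card_Zs: "real (card (Zs b :: 'a::{finite,field} set)) = (if b = 1 then 1 else real CARD('a))"
  by (simp add: Zs_def)

lemma count_formula:
  fixes n :: "nat \<Rightarrow> nat"
  defines "q \<equiv> real CARD('a::{finite,field})"
  shows "real (card {x \<in> {0..<7} \<rightarrow>\<^sub>E (UNIV::'a set).
                   (\<forall>i<7. n i = 1 \<longrightarrow> x i = 0) \<and> x 1 * x 4 + x 2 * x 5 + x 3 * x 6 = 0})
   = real (card (Zs (n 0) :: 'a set)) *
      (real (card (Zs (n 1) :: 'a set)) * real (card (Zs (n 4) :: 'a set)) *
        (real (card (Zs (n 2) :: 'a set)) * real (card (Zs (n 5) :: 'a set)) * alph (n 3) (n 6) q
           + bet (n 3) (n 6) q * alph (n 2) (n 5) q)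
       + bet (n 3) (n 6) q * bet (n 2) (n 5) q * (alph (n 1) (n 4) q + bet (n 1) (n 4) q))"
proof -
  have s1: "(\<Sum>x3\<in>Zs (n 3). \<Sum>x6\<in>Zs (n 6). if x1 * x4 + x2 * x5 + x3 * x6 = (0::'a) then 1 else 0)
     = alph (n 3) (n 6) q + bet (n 3) (n 6) q * (if x2 * x5 = - (x1 * x4) then 1 else 0)" for x1 x4 x2 x5 :: 'a
  proof -
    have "(\<Sum>x3\<in>Zs (n 3). \<Sum>x6\<in>Zs (n 6). if x1 * x4 + x2 * x5 + x3 * x6 = (0::'a) then 1 else 0)
        = Dc (Zs (n 3)) (Zs (n 6)) (- (x1 * x4 + x2 * x5))"
      unfolding Dc_def by (intro sum.cong refl) (metis add.commute eq_neg_iff_add_eq_0)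
    also have "\<dots> = alph (n 3) (n 6) q + bet (n 3) (n 6) q * (if x2 * x5 = - (x1 * x4) then 1 else 0)"
    proof -
      have c: "(-(x1*x4 + x2*x5) = 0) = (x2*x5 = -(x1*x4))" by (simp add: add_eq_0_iff eq_commute[of "-(x1*x4)"])
      show ?thesis unfolding Dc_eval q_def c by simp
    qed
    finally show ?thesis .
  qed
  have s2: "(\<Sum>x2\<in>Zs (n 2). \<Sum>x5\<in>Zs (n 5). alph (n 3) (n 6) q + bet (n 3) (n 6) q * (if x2 * x5 = - (x1 * x4) then 1 else 0))
     = real (card (Zs (n 2) :: 'a set)) * real (card (Zs (n 5) :: 'a set)) * alph (n 3) (n 6) q
           + bet (n 3) (n 6) q * alph (n 2) (n 5) q + bet (n 3) (n 6) q * bet (n 2) (n 5) q * (if x1 * x4 = 0 then 1 else 0)"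
    for x1 x4 :: 'a
    unfolding sum_pair_affine Dc_eval q_def by (simp add: algebra_simps)
  have s3: "(\<Sum>x1\<in>Zs (n 1). \<Sum>x4\<in>Zs (n 4). A + B * (if x1 * x4 = (0::'a) then 1 else 0))
     = real (card (Zs (n 1) :: 'a set)) * real (card (Zs (n 4) :: 'a set)) * A + B * (alph (n 1) (n 4) q + bet (n 1) (n 4) q)" for A B
    unfolding sum_pair_affine Dc_eval q_def by simp
  have s0: "(\<Sum>x0::'a\<in>Zs (n 0). C) = real (card (Zs (n 0) :: 'a set)) * C" for C by simp
  show ?thesis
    unfolding count_nested s1 s2 s3 s0 by (simp add: algebra_simps)
qed

definition cz :: "nat \<Rightarrow> int list" where "cz b = (if b = 1 then [1] else [0,1])"
definition al :: "nat \<Rightarrow> nat \<Rightarrow> int list" where "al b b' = (if b = 1 \<or> b' = 1 then [] else [-1,1])"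
definition be :: "nat \<Rightarrow> nat \<Rightarrow> int list" where "be b b' = (if b = 1 \<and> b' = 1 then [1] else [0,1])"

lemma ev_cz: "ev (cz b) (real CARD('a::{finite,field})) = real (card (Zs b :: 'a set))"
  by (simp add: cz_def Zs_def)
lemma ev_al: "ev (al b b') q = alph b b' q"
  by (simp add: al_def alph_def)
lemma ev_be: "ev (be b b') q = bet b b' q"
  by (simp add: be_def bet_def)

definition PD :: "(nat \<Rightarrow> nat) \<Rightarrow> int list" where
  "PD n = pmul [0,0,0,0,-1,0,1] (pmul (cz (n 0))
     (padd (pmul (pmul (cz (n 1)) (cz (n 4))) (padd (pmul (pmul (cz (n 2)) (cz (n 5))) (al (n 3) (n 6)))
                                                  (pmul (be (n 3) (n 6)) (al (n 2) (n 5)))))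
           (pmul (pmul (be (n 3) (n 6)) (be (n 2) (n 5))) (padd (al (n 1) (n 4)) (be (n 1) (n 4))))))"

lemma densS_poly:
  fixes K :: "'a::{finite,field} itself" and n :: "nat \<Rightarrow> nat"
  shows "(1 - real CARD('a) powi (-2)) * real CARD('a) ^ 12 * densS K n = ev (PD n) (real CARD('a))"
proof -
  define q where "q = real CARD('a)"
  have q0: "q \<noteq> 0" by (simp add: q_def)
  have c: "(1 - q powi (-2)) * q ^ 12 * q powi (-6) = q^6 - q^4"
    using q0 by (simp add: power_int_minus field_simps flip: power_add)
  have e: "ev [0,0,0,0,-1,0,1] q = q^6 - q^4"
    by (simp add: eval_nat_numeral algebra_simps)
  have cz': "ev (cz b) q = real (card (Zs b :: 'a set))" for b unfolding q_def by (rule ev_cz)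
  have key: "(1 - q powi (-2)) * q ^ 12 * (q powi (-6) * X) = (q^6 - q^4) * X" for X
    using c by (metis mult.assoc)
  show ?thesis
    unfolding densS_def count_formula PD_def ev_pmul ev_padd ev_al ev_be q_def[symmetric] e cz'
    by (rule key)
qed



section \<open>Boolean lists as elements of B7\<close>

definition tofun :: "bool list \<Rightarrow> nat \<Rightarrow> nat" where
  "tofun bs i = (if i < length bs \<and> bs ! i then 1 else 0)"

fun bls :: "nat \<Rightarrow> bool list list" where
  "bls 0 = [[]]"
| "bls (Suc d) = map (Cons False) (bls d) @ map (Cons True) (bls d)"

definition tolist :: "(nat \<Rightarrow> nat) \<Rightarrow> bool list" where
  "tolist n = map (\<lambda>i. n i = 1) [0..<7]"

lemma set_bls: "set (bls d) = {bs. length bs = d}"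
proof (induction d)
  case 0 thus ?case by auto
next
  case (Suc d)
  show ?case
  proof
    show "set (bls (Suc d)) \<subseteq> {bs. length bs = Suc d}" using Suc by auto
  next
    show "{bs. length bs = Suc d} \<subseteq> set (bls (Suc d))"
    proof
      fix bs :: "bool list" assume "bs \<in> {bs. length bs = Suc d}"
      then obtain b cs where bs: "bs = b # cs" "length cs = d" by (cases bs) auto
      thus "bs \<in> set (bls (Suc d))" using Suc by (cases b) auto
    qed
  qed
qed

lemma distinct_bls: "distinct (bls d)"
  by (induction d) (auto simp: distinct_map inj_on_def)

lemma tofun_B7: "length bs = 7 \<Longrightarrow> tofun bs \<in> B7"
  by (auto simp: B7_def tofun_def)

lemma tofun_tolist: "n \<in> B7 \<Longrightarrow> tofun (tolist n) = n"
proof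
  fix i assume n: "n \<in> B7"
  show "tofun (tolist n) i = n i"
  proof (cases "i < 7")
    case True
    with n have "n i \<in> {0,1}" by (auto simp: B7_def)
    with True show ?thesis by (auto simp: tofun_def tolist_def)
  next
    case False
    with n show ?thesis by (auto simp: tofun_def tolist_def B7_def)
  qed
qed

lemma tolist_tofun: "length bs = 7 \<Longrightarrow> tolist (tofun bs) = bs"
  by (auto simp: tolist_def tofun_def intro!: nth_equalityI)

lemma length_tolist[simp]: "length (tolist n) = 7"
  by (simp add: tolist_def)

lemma B7_image: "B7 = tofun ` set (bls 7)"
proof
  show "B7 \<subseteq> tofun ` set (bls 7)"
  proof
    fix n assume "n \<in> B7"
    hence "n = tofun (tolist n)" by (simp add: tofun_tolist)
    thus "n \<in> tofun ` set (bls 7)" by (simp add: set_bls)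
  qed
qed (auto simp: set_bls tofun_B7)

lemma inj_tofun: "inj_on tofun (set (bls 7))"
  by (rule inj_on_inverseI[where g=tolist]) (simp add: set_bls tolist_tofun)

lemma sum_B7: "(\<Sum>n\<in>B7. h n) = (\<Sum>bs\<leftarrow>bls 7. h (tofun bs))"
proof -
  have "(\<Sum>n\<in>B7. h n) = (\<Sum>bs\<in>set (bls 7). h (tofun bs))"
    unfolding B7_image by (rule sum.reindex[OF inj_tofun, unfolded comp_def])
  also have "\<dots> = (\<Sum>bs\<leftarrow>bls 7. h (tofun bs))"
    by (rule sum_list_distinct_conv_sum_set[symmetric]) (rule distinct_bls)
  finally show ?thesis .
qed

section \<open>Zeta and Moebius transforms on boolean lists\<close>

fun Zr :: "(bool list \<Rightarrow> int) \<Rightarrow> bool list \<Rightarrow> int" where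
  "Zr f [] = f []"
| "Zr f (b # bs) = (if b then Zr (\<lambda>cs. f (False # cs)) bs + Zr (\<lambda>cs. f (True # cs)) bs
                    else Zr (\<lambda>cs. f (False # cs)) bs)"

fun Mo :: "(bool list \<Rightarrow> int) \<Rightarrow> bool list \<Rightarrow> int" where
  "Mo f [] = f []"
| "Mo f (b # bs) = (if b then Mo (\<lambda>cs. f (True # cs)) bs - Mo (\<lambda>cs. f (False # cs)) bs
                    else Mo (\<lambda>cs. f (False # cs)) bs)"

lemma Zr_diff: "Zr (\<lambda>x. g x - h x) bs = Zr g bs - Zr h bs"
  by (induction bs arbitrary: g h) auto

lemma Zr_add: "Zr (\<lambda>x. g x + h x) bs = Zr g bs + Zr h bs"
  by (induction bs arbitrary: g h) auto

lemma Mo_diff: "Mo (\<lambda>x. g x - h x) bs = Mo g bs - Mo h bs"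
  by (induction bs arbitrary: g h) auto

lemma Mo_add: "Mo (\<lambda>x. g x + h x) bs = Mo g bs + Mo h bs"
  by (induction bs arbitrary: g h) auto

lemma Zr_Mo: "Zr (Mo f) bs = f bs"
proof (induction bs arbitrary: f)
  case Nil thus ?case by simp
next
  case (Cons b bs)
  have F: "(\<lambda>cs. Mo f (False # cs)) = Mo (\<lambda>cs. f (False # cs))" by auto
  have T: "(\<lambda>cs. Mo f (True # cs)) = (\<lambda>cs. Mo (\<lambda>cs. f (True # cs)) cs - Mo (\<lambda>cs. f (False # cs)) cs)" by auto
  show ?case using Cons by (simp add: F T Zr_diff)
qed

lemma Mo_Zr: "Mo (Zr f) bs = f bs"
proof (induction bs arbitrary: f)
  case Nil thus ?case by simp
next
  case (Cons b bs)
  have F: "(\<lambda>cs. Zr f (False # cs)) = Zr (\<lambda>cs. f (False # cs))" by auto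
  have T: "(\<lambda>cs. Zr f (True # cs)) = (\<lambda>cs. Zr (\<lambda>cs. f (False # cs)) cs + Zr (\<lambda>cs. f (True # cs)) cs)" by auto
  show ?case using Cons by (simp add: F T Mo_add)
qed

lemma Zr_cong: "(\<And>cs. length cs = length bs \<Longrightarrow> f cs = g cs) \<Longrightarrow> Zr f bs = Zr g bs"
proof (induction bs arbitrary: f g)
  case Nil thus ?case by simp
next
  case (Cons b bs)
  have F: "Zr (\<lambda>cs. f (False # cs)) bs = Zr (\<lambda>cs. g (False # cs)) bs"
    by (rule Cons.IH) (use Cons.prems in simp)
  have T: "Zr (\<lambda>cs. f (True # cs)) bs = Zr (\<lambda>cs. g (True # cs)) bs"
    by (rule Cons.IH) (use Cons.prems in simp)
  show ?case by (simp only: Zr.simps F T)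
qed

lemma Mo_cong: "(\<And>cs. length cs = length bs \<Longrightarrow> f cs = g cs) \<Longrightarrow> Mo f bs = Mo g bs"
proof (induction bs arbitrary: f g)
  case Nil thus ?case by simp
next
  case (Cons b bs)
  have F: "Mo (\<lambda>cs. f (False # cs)) bs = Mo (\<lambda>cs. g (False # cs)) bs"
    by (rule Cons.IH) (use Cons.prems in simp)
  have T: "Mo (\<lambda>cs. f (True # cs)) bs = Mo (\<lambda>cs. g (True # cs)) bs"
    by (rule Cons.IH) (use Cons.prems in simp)
  show ?case by (simp only: Mo.simps F T)
qed

abbreviation leL :: "bool list \<Rightarrow> bool list \<Rightarrow> bool" where
  "leL cs bs \<equiv> list_all2 (\<lambda>c b. c \<longrightarrow> b) cs bs"

lemma finite_leL: "finite {cs. leL cs bs}"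
proof -
  have "{cs. leL cs bs} \<subseteq> set (bls (length bs))"
    by (auto simp: set_bls dest: list_all2_lengthD)
  thus ?thesis by (rule finite_subset) simp
qed

lemma Zr_sum: "Zr f bs = (\<Sum>cs\<in>{cs. leL cs bs}. f cs)"
proof (induction bs arbitrary: f)
  case Nil thus ?case by simp
next
  case (Cons b bs)
  let ?L = "{cs. leL cs bs}"
  have fin: "finite ?L" by (rule finite_leL)
  have sF: "(\<Sum>cs\<in>Cons False ` ?L. f cs) = (\<Sum>cs\<in>?L. f (False # cs))"
    by (subst sum.reindex) (auto simp: inj_on_def)
  have sT: "(\<Sum>cs\<in>Cons True ` ?L. f cs) = (\<Sum>cs\<in>?L. f (True # cs))"
    by (subst sum.reindex) (auto simp: inj_on_def)
  show ?case
  proof (cases b)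
    case True
    have "{cs. leL cs (b # bs)} = Cons False ` ?L \<union> Cons True ` ?L"
      using True by (auto simp: list_all2_Cons2)
    moreover have "(\<Sum>cs\<in>Cons False ` ?L \<union> Cons True ` ?L. f cs)
        = (\<Sum>cs\<in>Cons False ` ?L. f cs) + (\<Sum>cs\<in>Cons True ` ?L. f cs)"
      by (rule sum.union_disjoint) (use fin in auto)
    ultimately show ?thesis using True Cons sF sT by simp
  next
    case False
    have "{cs. leL cs (b # bs)} = Cons False ` ?L"
      using False by (auto simp: list_all2_Cons2)
    thus ?thesis using False Cons sF by simp
  qed
qed



definition chiN :: "(nat \<Rightarrow> nat) \<Rightarrow> int" where
  "chiN n = (if n 2 + n 3 + n 4 + n 5 + n 6 = 0 \<or> n 1 + n 3 + n 4 + n 5 + n 6 = 0 \<or>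
                n 1 + n 2 + n 4 + n 5 + n 6 = 0 \<or> n 0 + n 2 + n 5 + n 3 + n 6 = 0 \<or>
                n 0 + n 1 + n 4 + n 3 + n 6 = 0 \<or> n 0 + n 1 + n 4 + n 2 + n 5 = 0 \<or>
                n 0 + n 1 + n 2 + n 3 = 0 then 1 else 0)"

definition chiL :: "bool list \<Rightarrow> int" where "chiL bs = chiN (tofun bs)"

definition GF :: "int list" where
  "GF = foldr padd (map (\<lambda>bs. psc (Mo chiL bs) (PF (tofun bs))) (bls 7)) []"
definition GD :: "int list" where
  "GD = foldr padd (map (\<lambda>bs. psc (Mo chiL bs) (PD (tofun bs))) (bls 7)) []"

lemma GF_GD: "list_all (\<lambda>c. c = 0) (padd GF (psc (-1) GD))"
  by code_simp

lemma minz: "(min (a::nat) b = 0) = (a = 0 \<or> b = 0)" by auto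

lemma chiN_B7S: "n \<in> B7 \<Longrightarrow> (if n \<in> B7S then 1 else 0) = chiN n"
  by (simp add: B7S_def formA_def formB_def formC_def chiN_def insert_Diff_if minz)

definition chi :: "(nat \<Rightarrow> nat) \<Rightarrow> int" where "chi m = (if m \<in> B7S then 1 else 0)"

definition muE :: "(nat \<Rightarrow> nat) \<Rightarrow> int" where
  "muE n = (if n \<in> B7 then Mo (\<lambda>cs. chi (tofun cs)) (tolist n) else 0)"

lemma B7_le1: "n \<in> B7 \<Longrightarrow> i < 7 \<Longrightarrow> n i \<le> 1"
  by (auto simp: B7_def)

lemma B7_ge7: "n \<in> B7 \<Longrightarrow> i \<ge> 7 \<Longrightarrow> n i = 0"
  by (auto simp: B7_def)

lemma down_set:
  assumes n: "n \<in> B7"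
  shows "{m\<in>B7. \<forall>i. m i \<le> n i} = tofun ` {cs. leL cs (tolist n)}"
proof
  show "{m\<in>B7. \<forall>i. m i \<le> n i} \<subseteq> tofun ` {cs. leL cs (tolist n)}"
  proof
    fix m assume m: "m \<in> {m\<in>B7. \<forall>i. m i \<le> n i}"
    hence mB: "m \<in> B7" and le: "\<And>i. m i \<le> n i" by auto
    have "leL (tolist m) (tolist n)"
      unfolding list_all2_conv_all_nth
    proof (intro conjI allI impI)
      fix i assume "i < length (tolist m)" and mi: "tolist m ! i"
      hence i: "i < 7" by simp
      show "tolist n ! i"
        using le[of i] B7_le1[OF n i] i mi by (auto simp: tolist_def)
    qed simp
    moreover have "m = tofun (tolist m)" using mB by (simp add: tofun_tolist)
    ultimately show "m \<in> tofun ` {cs. leL cs (tolist n)}" by blast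
  qed
next
  show "tofun ` {cs. leL cs (tolist n)} \<subseteq> {m\<in>B7. \<forall>i. m i \<le> n i}"
  proof clarify
    fix cs assume cs: "leL cs (tolist n)"
    have len: "length cs = 7" using list_all2_lengthD[OF cs] by simp
    have "tofun cs i \<le> n i" for i
    proof (cases "i < 7")
      case True
      have "cs ! i \<longrightarrow> tolist n ! i" using cs True len by (simp add: list_all2_conv_all_nth)
      thus ?thesis using True len by (auto simp: tofun_def tolist_def)
    next
      case False thus ?thesis by (simp add: tofun_def len)
    qed
    thus "tofun cs \<in> B7 \<and> (\<forall>i. tofun cs i \<le> n i)" using tofun_B7[OF len] by blast
  qed
qed

lemma down_sum:
  assumes n: "n \<in> B7"
  shows "(\<Sum>m\<in>{m\<in>B7. \<forall>i. m i \<le> n i}. \<mu> m) = Zr (\<lambda>cs. \<mu> (tofun cs)) (tolist n)"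
proof -
  have sub: "{cs. leL cs (tolist n)} \<subseteq> set (bls 7)"
    by (auto simp: set_bls dest: list_all2_lengthD)
  have "(\<Sum>m\<in>{m\<in>B7. \<forall>i. m i \<le> n i}. \<mu> m) = (\<Sum>cs\<in>{cs. leL cs (tolist n)}. \<mu> (tofun cs))"
    unfolding down_set[OF n] by (rule sum.reindex[OF inj_on_subset[OF inj_tofun sub], unfolded comp_def])
  thus ?thesis by (simp add: Zr_sum)
qed

lemma mu0S_eq: "mu0S = muE"
  unfolding mu0S_def
proof (rule the_equality)
  show "(\<forall>n. n \<notin> B7 \<longrightarrow> muE n = 0) \<and>
        (\<forall>n\<in>B7. (if n \<in> B7S then 1 else 0) = (\<Sum>m\<in>{m\<in>B7. \<forall>i. m i \<le> n i}. muE m))"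
  proof (intro conjI allI impI ballI)
    fix n :: "nat \<Rightarrow> nat" assume "n \<notin> B7" thus "muE n = 0" by (simp add: muE_def)
  next
    fix n :: "nat \<Rightarrow> nat" assume n: "n \<in> B7"
    have "(\<Sum>m\<in>{m\<in>B7. \<forall>i. m i \<le> n i}. muE m) = Zr (\<lambda>cs. muE (tofun cs)) (tolist n)"
      by (rule down_sum[OF n])
    also have "\<dots> = Zr (Mo (\<lambda>cs. chi (tofun cs))) (tolist n)"
      by (rule Zr_cong) (simp add: muE_def tofun_B7 tolist_tofun)
    also have "\<dots> = chi n" by (simp add: Zr_Mo tofun_tolist[OF n])
    finally show "(if n \<in> B7S then 1 else 0) = (\<Sum>m\<in>{m\<in>B7. \<forall>i. m i \<le> n i}. muE m)"
      by (simp add: chi_def)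
  qed
next
  fix \<mu> :: "(nat \<Rightarrow> nat) \<Rightarrow> int"
  assume P: "(\<forall>n. n \<notin> B7 \<longrightarrow> \<mu> n = 0) \<and>
        (\<forall>n\<in>B7. (if n \<in> B7S then 1 else 0) = (\<Sum>m\<in>{m\<in>B7. \<forall>i. m i \<le> n i}. \<mu> m))"
  show "\<mu> = muE"
  proof
    fix n
    show "\<mu> n = muE n"
    proof (cases "n \<in> B7")
      case False thus ?thesis using P by (simp add: muE_def)
    next
      case True
      have zr: "Zr (\<lambda>cs. \<mu> (tofun cs)) cs = chi (tofun cs)" if "length cs = length (tolist n)" for cs
      proof -
        have len: "length cs = 7" using that by simp
        have "chi (tofun cs) = (\<Sum>m\<in>{m\<in>B7. \<forall>i. m i \<le> tofun cs i}. \<mu> m)"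
          using P tofun_B7[OF len] by (simp add: chi_def)
        also have "\<dots> = Zr (\<lambda>cs. \<mu> (tofun cs)) cs"
          by (simp add: down_sum[OF tofun_B7[OF len]] tolist_tofun[OF len])
        finally show ?thesis by simp
      qed
      have "\<mu> n = Mo (Zr (\<lambda>cs. \<mu> (tofun cs))) (tolist n)"
        by (simp add: Mo_Zr tofun_tolist[OF True])
      also have "\<dots> = Mo (\<lambda>cs. chi (tofun cs)) (tolist n)"
        by (rule Mo_cong) (rule zr)
      finally show ?thesis using True by (simp add: muE_def)
    qed
  qed
qed

lemma muE_tofun: "bs \<in> set (bls 7) \<Longrightarrow> muE (tofun bs) = Mo chiL bs"
proof -
  assume "bs \<in> set (bls 7)"
  hence len: "length bs = 7" by (simp add: set_bls)
  have "muE (tofun bs) = Mo (\<lambda>cs. chi (tofun cs)) bs"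
    by (simp add: muE_def tofun_B7[OF len] tolist_tofun[OF len])
  also have "\<dots> = Mo chiL bs"
    by (rule Mo_cong) (simp add: chiL_def chi_def chiN_B7S tofun_B7 len)
  finally show ?thesis .
qed

lemma ev_zero: "list_all (\<lambda>c. c = 0) xs \<Longrightarrow> ev xs q = 0"
  by (induction xs) auto

lemma card_field_ge2: "CARD('a::{finite,field}) \<ge> 2"
proof -
  have "card {0::'a, 1} \<le> CARD('a)" by (rule card_mono) auto
  thus ?thesis by simp
qed

lemma tofun_le1: "i < 7 \<Longrightarrow> tofun bs i \<le> 1"
  by (simp add: tofun_def)

theorem mainTheorem13:
  fixes K :: "'a::{finite,field} itself"
  shows "(\<Sum>n\<in>B7. real_of_int (mu0S n) * factv CARD('a) n)
       = (\<Sum>n\<in>B7. real_of_int (mu0S n) * densS K n)"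
proof -
  define q where "q = real CARD('a)"
  define c where "c = (1 - q powi (-2)) * q ^ 12"
  have q2: "q \<ge> 2" using card_field_ge2[where 'a='a] by (simp add: q_def)
  have c0: "c \<noteq> 0"
  proof -
    have "q powi (-2) = 1 / q^2" by (simp add: power_int_minus inverse_eq_divide)
    moreover have "1 / q^2 < 1"
    proof -
      have "q * q \<ge> 2 * 2" using q2 by (intro mult_mono) auto
      thus ?thesis using q2 by (simp add: power2_eq_square)
    qed
    ultimately have "1 - q powi (-2) > 0" by simp
    moreover have "q ^ 12 > 0" using q2 by simp
    ultimately show ?thesis unfolding c_def by simp
  qed
  have L: "c * (\<Sum>n\<in>B7. real_of_int (mu0S n) * factv CARD('a) n) = ev GF q"
  proof -
    have "c * (\<Sum>n\<in>B7. real_of_int (mu0S n) * factv CARD('a) n)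
        = (\<Sum>bs\<leftarrow>bls 7. c * (real_of_int (mu0S (tofun bs)) * factv CARD('a) (tofun bs)))"
      unfolding sum_B7 by (simp add: sum_list_const_mult)
    also have "\<dots> = (\<Sum>bs\<leftarrow>bls 7. ev (psc (Mo chiL bs) (PF (tofun bs))) q)"
    proof (rule arg_cong[where f=sum_list], rule map_cong[OF refl])
      fix bs assume bs: "bs \<in> set (bls 7)"
      have "c * factv CARD('a) (tofun bs) = ev (PF (tofun bs)) q"
        unfolding c_def q_def by (rule factv_poly[OF card_field_ge2 tofun_le1])
      thus "c * (real_of_int (mu0S (tofun bs)) * factv CARD('a) (tofun bs)) = ev (psc (Mo chiL bs) (PF (tofun bs))) q"
        by (simp add: mu0S_eq muE_tofun[OF bs] algebra_simps)
    qed
    also have "\<dots> = ev GF q"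
      by (simp add: GF_def ev_sum_list o_def)
    finally show ?thesis .
  qed
  have R: "c * (\<Sum>n\<in>B7. real_of_int (mu0S n) * densS K n) = ev GD q"
  proof -
    have "c * (\<Sum>n\<in>B7. real_of_int (mu0S n) * densS K n)
        = (\<Sum>bs\<leftarrow>bls 7. c * (real_of_int (mu0S (tofun bs)) * densS K (tofun bs)))"
      unfolding sum_B7 by (simp add: sum_list_const_mult)
    also have "\<dots> = (\<Sum>bs\<leftarrow>bls 7. ev (psc (Mo chiL bs) (PD (tofun bs))) q)"
    proof (rule arg_cong[where f=sum_list], rule map_cong[OF refl])
      fix bs assume bs: "bs \<in> set (bls 7)"
      have "c * densS K (tofun bs) = ev (PD (tofun bs)) q"
        unfolding c_def q_def by (rule densS_poly)
      thus "c * (real_of_int (mu0S (tofun bs)) * densS K (tofun bs)) = ev (psc (Mo chiL bs) (PD (tofun bs))) q"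
        by (simp add: mu0S_eq muE_tofun[OF bs] algebra_simps)
    qed
    also have "\<dots> = ev GD q"
      by (simp add: GD_def ev_sum_list o_def)
    finally show ?thesis .
  qed
  have "ev GF q - ev GD q = 0"
    using ev_zero[OF GF_GD, of q] by simp
  hence "c * (\<Sum>n\<in>B7. real_of_int (mu0S n) * factv CARD('a) n) = c * (\<Sum>n\<in>B7. real_of_int (mu0S n) * densS K n)"
    using L R by simp
  thus ?thesis using c0 by simp
qed

end
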